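(* Let $\mathbf{A}\in\mathbb{C}^{n\times n}$ satisfy $\mathbf{A}^{\mathsf{H}}\mathbf{A}=\mathbf{I}$, let $p_{\mathbf{M}}$ be a distribution on sampling matrices $\mathbf{M}\in\{0,1\}^{m\times n}$ (rows are distinct standard basis vectors of $\mathbb{R}^n$) such that $\mathbb{E}_{\mathbf{M}\sim p_{\mathbf{M}}}[\mathbf{M}^{\mathsf{T}}\mathbf{M}]$ has full rank, and let $p_{\mathbf{x}}$ be a distribution on images $\mathbf{x}\in\mathbb{C}^n$. Draw independently $\mathbf{x}\sim p_{\mathbf{x}}$, $\mathbf{M}\sim p_{\mathbf{M}}$, $\mathbf{M}'\sim p_{\mathbf{M}}$, $\mathbf{e}\sim\mathcal{N}(0,\sigma^2\mathbf{I})$, $\mathbf{e}'\sim\mathcal{N}(0,\sigma^2\mathbf{I})$ (noise in $\mathbb{C}^m$), and set $\mathbf{y}=\mathbf{M}\mathbf{A}\mathbf{x}+\mathbf{e}$, $\mathbf{y}'=\mathbf{M}'\mathbf{A}\mathbf{x}+\mathbf{e}'$. Let $\mathsf{T}_{\boldsymbol{\theta}}(\cdot,\mathbf{y})$ be an operator on $\mathbb{C}^n$ with trainable parameters $\boldsymbol{\theta}$, and let $\bar{\mathbf{x}}=\bar{\mathbf{x}}(\boldsymbol{\theta},\mathbf{y})$ denote its fixed point, $\bar{\mathbf{x}}=\mathsf{T}_{\boldsymbol{\theta}}(\bar{\mathbf{x}},\mathbf{y})$. Define $\overline{\mathbf{W}}=\mathrm{diag}(\overline{w_1},\dots,\overline{w_n})$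 with $\overline{w_k}=(\mathbb{E}[\mathbf{M}'^{\mathsf{T}}\mathbf{M}']_{k,k})^{-1/2}$ if this diagonal entry is nonzero and $\overline{w_k}=0$ otherwise, and $\mathbf{W}=\mathbf{M}'\overline{\mathbf{W}}(\mathbf{M}'\overline{\mathbf{W}})^{\mathsf{T}}\in\mathbb{R}^{m\times m}$. Consider the supervised loss $\ell_{\mathsf{sup}}(\boldsymbol{\theta})=\mathbb{E}\big[\tfrac12\|\bar{\mathbf{x}}-\mathbf{x}\|_2^2\big]$ and the weighted self-supervised loss $\ell_{\mathsf{self}}(\boldsymbol{\theta})=\mathbb{E}\big[\tfrac12\|\mathbf{M}'\mathbf{A}\bar{\mathbf{x}}-\mathbf{y}'\|_{\mathbf{W}}^2\big]$, where $\|\mathbf{v}\|_{\mathbf{W}}^2=\mathbf{v}^{\mathsf{H}}\mathbf{W}\mathbf{v}$. Then their Jacobian-free backpropagation updates coincide: $$\mathsf{JFB}_{\ell_{\mathsf{self}}}(\boldsymbol{\theta})=\mathsf{JFB}_{\ell_{\mathsf{sup}}}(\boldsymbol{\theta}),$$ i.e. $$\mathrm{Real}\Big(\mathbb{E}\big[(\nabla_{\boldsymbol{\theta}}\mathsf{T}_{\boldsymbol{\theta}}(\bar{\mathbf{x}}))^{\mathsf{H}}(\mathbf{M}'\mathbf{A})^{\mathsf{H}}\mathbf{W}(\mathbf{M}'\mathbf{A}\bar{\mathbf{x}}-\mathbf{y}')\big]\Big)=\mathrm{Real}\Big(\mathbb{E}\big[(\nabla_{\boldsymbol{\theta}}\mathsf{T}_{\boldsymbol{\theta}}(\bar{\mathbf{x}}))^{\mathsf{H}}(\bar{\mathbf{x}}-\mathbf{x})\big]\Big),$$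 where the expectations are over all the random quantities above.
   Context: For a loss $\ell$ depending on $\boldsymbol{\theta}$ through the fixed point $\bar{\mathbf{x}}$, the Jacobian-free backpropagation (JFB) update is $\mathsf{JFB}_{\ell}(\boldsymbol{\theta})=\mathrm{Real}\big((\nabla_{\boldsymbol{\theta}}\mathsf{T}_{\boldsymbol{\theta}}(\bar{\mathbf{x}}))^{\mathsf{H}}[\partial\ell/\partial\bar{\mathbf{x}}]^{\mathsf{T}}\big)$ (with expectation over the data), where $\nabla_{\boldsymbol{\theta}}\mathsf{T}_{\boldsymbol{\theta}}(\bar{\mathbf{x}})$ is the Jacobian of $\mathsf{T}_{\boldsymbol{\theta}}$ with respect to $\boldsymbol{\theta}$ evaluated at the fixed point, and $[\partial\ell/\partial\bar{\mathbf{x}}]^{\mathsf{T}}$ is the gradient of the per-sample loss with respect to $\bar{\mathbf{x}}$ (treating $\bar{\mathbf{x}}$ as a free variable): $\bar{\mathbf{x}}-\mathbf{x}$ for $\ell_{\mathsf{sup}}$ and $(\mathbf{M}'\mathbf{A})^{\mathsf{H}}\mathbf{W}(\mathbf{M}'\mathbf{A}\bar{\mathbf{x}}-\mathbf{y}')$ for $\ell_{\mathsf{self}}$. $\mathbf{A}$ is called "orthogonal" in the paper, meaning $\mathbf{A}^{\mathsf{H}}\mathbf{A}=\mathbf{I}$. $\mathsf{T}_{\boldsymbol{\theta}}$ is deterministic, so $\bar{\mathbf{x}}$ depends only on $(\mathbf{x},\mathbf{M},\mathbf{e})$ given $\boldsymbol{\theta}$. *)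

theory Defs
  imports "HOL-Probability.Probability"
begin

text \<open>Stored with complex entries
  (0 and 1) so that it can be multiplied with complex vectors.\<close>
definition sampling_matrix :: "complex^'n^'m \<Rightarrow> bool" where
  "sampling_matrix M \<longleftrightarrow> (\<forall>i. \<exists>j. M $ i = axis j 1) \<and> inj (\<lambda>i. M $ i)"

definition adjoint_mat :: "complex^'n^'m \<Rightarrow> complex^'m^'n" where
  "adjoint_mat A = (\<chi> i j. cnj (A $ j $ i))"

definition Re_vec :: "complex^'p \<Rightarrow> real^'p" where
  "Re_vec v = (\<chi> i. Re (v $ i))"

text \<open>Jacobian matrix (n x p, complex entries) of a real-linear map from real^p to complex^n
  (the derivative of the operator with respect to the real parameter vector).\<close>
definition jacobian_matrix :: "(real^'p \<Rightarrow> complex^'n) \<Rightarrow> complex^'p^'n" where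
  "jacobian_matrix D = (\<chi> k i. D (axis i 1) $ k)"

text \<open>Circularly-symmetric complex Gaussian N(0, sigma^2) on C: real and imaginary parts
  independent N(0, sigma^2/2).\<close>
definition cgauss :: "real \<Rightarrow> complex measure" where
  "cgauss \<sigma> = distr
     (density lborel (normal_density 0 (\<sigma> / sqrt 2)) \<Otimes>\<^sub>M density lborel (normal_density 0 (\<sigma> / sqrt 2)))
     borel (\<lambda>(a, b). Complex a b)"

definition cgauss_vec :: "real \<Rightarrow> (complex^'m) measure" where
  "cgauss_vec \<sigma> = distr (PiM UNIV (\<lambda>_. cgauss \<sigma>)) borel (\<lambda>f. \<chi> i. f i)"

definition mean_MtM :: "(complex^'n^'m) measure \<Rightarrow> complex^'n^'n" where
  "mean_MtM pM = integral\<^sup>L pM (\<lambda>M. transpose M ** M)"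

definition Wbar :: "(complex^'n^'m) measure \<Rightarrow> complex^'n^'n" where
  "Wbar pM = (\<chi> i j. if i = j then
       (if mean_MtM pM $ i $ i = 0 then 0
        else complex_of_real (Re (mean_MtM pM $ i $ i) powr (-1/2)))
     else 0)"

definition Wmat :: "(complex^'n^'m) measure \<Rightarrow> complex^'n^'m \<Rightarrow> complex^'m^'m" where
  "Wmat pM M' = (M' ** Wbar pM) ** transpose (M' ** Wbar pM)"

end

theory Submission
  imports Defs
begin

lemma mv_cont: "continuous_on UNIV (\<lambda>p::('a::real_normed_field^'n^'m) \<times> ('a^'n). fst p *v snd p)"
  unfolding matrix_vector_mult_def by (intro continuous_intros)

lemma mm_cont: "continuous_on UNIV (\<lambda>p::('a::real_normed_field^'n^'m) \<times> ('a^'k^'n). fst p ** snd p)"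
  unfolding matrix_matrix_mult_def by (intro continuous_intros)

lemma borel_measurable_mv[measurable (raw)]:
  fixes f :: "'x \<Rightarrow> complex^'n^'m" and g :: "'x \<Rightarrow> complex^'n"
  assumes "f \<in> borel_measurable N" "g \<in> borel_measurable N"
  shows "(\<lambda>w. f w *v g w) \<in> borel_measurable N"
  by (rule borel_measurable_continuous_Pair[OF assms]) (rule mv_cont)

lemma borel_measurable_mm[measurable (raw)]:
  fixes f :: "'x \<Rightarrow> complex^'n^'m" and g :: "'x \<Rightarrow> complex^'k^'n"
  assumes "f \<in> borel_measurable N" "g \<in> borel_measurable N"
  shows "(\<lambda>w. f w ** g w) \<in> borel_measurable N"
  by (rule borel_measurable_continuous_Pair[OF assms]) (rule mm_cont)

lemma adj_cont: "continuous_on UNIV (adjoint_mat :: complex^'n^'m \<Rightarrow> _)"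
  unfolding adjoint_mat_def by (intro continuous_intros)

lemma borel_measurable_adj[measurable (raw)]:
  assumes "f \<in> borel_measurable N"
  shows "(\<lambda>w. adjoint_mat (f w :: complex^'n^'m)) \<in> borel_measurable N"
  using measurable_compose[OF assms borel_measurable_continuous_onI[OF adj_cont]] by simp

lemma tr_cont: "continuous_on UNIV (transpose :: complex^'n^'m \<Rightarrow> _)"
  unfolding transpose_def by (intro continuous_intros)

lemma borel_measurable_tr[measurable (raw)]:
  assumes "f \<in> borel_measurable N"
  shows "(\<lambda>w. transpose (f w :: complex^'n^'m)) \<in> borel_measurable N"
  using measurable_compose[OF assms borel_measurable_continuous_onI[OF tr_cont]] by simp

lemma bl_mv_left: "bounded_linear (\<lambda>Z::complex^'n^'m. Z *v w)"
  unfolding linear_conv_bounded_linear[symmetric]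
  by (rule linearI) (auto simp: vec_eq_iff matrix_vector_mult_def sum.distrib algebra_simps scaleR_sum_right)

lemma bl_mm_left: "bounded_linear (\<lambda>Z::complex^'n^'m. Z ** B)"
  unfolding linear_conv_bounded_linear[symmetric]
  by (rule linearI) (auto simp: vec_eq_iff matrix_matrix_mult_def sum.distrib algebra_simps scaleR_sum_right)

lemma bl_mm_right: "bounded_linear (\<lambda>Z::complex^'n^'m. C ** Z)"
  unfolding linear_conv_bounded_linear[symmetric]
  by (rule linearI) (auto simp: vec_eq_iff matrix_matrix_mult_def sum.distrib algebra_simps scaleR_sum_right)

lemma adj_mult: "adjoint_mat (A ** B) = adjoint_mat B ** adjoint_mat (A :: complex^'n^'m)"
  by (simp add: adjoint_mat_def matrix_matrix_mult_def vec_eq_iff mult.commute)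

lemma norm_sq_vec: "norm (x::'a::real_normed_vector^'n) ^ 2 = (\<Sum>i\<in>UNIV. norm (x$i) ^ 2)"
  unfolding norm_vec_def L2_set_def by (simp add: sum_nonneg)

lemma norm_mv_le: "norm ((B::complex^'n^'m) *v w) \<le> norm B * norm w"
proof -
  have "norm ((B *v w) $ i) \<le> norm (B $ i) * norm w" for i
  proof -
    have "norm ((B *v w) $ i) \<le> (\<Sum>j\<in>UNIV. norm (B$i$j) * norm (w$j))"
      unfolding matrix_vector_mult_def vec_lambda_beta by (rule order_trans[OF norm_sum]) (simp add: norm_mult)
    also have "\<dots> \<le> L2_set (\<lambda>j. norm (B$i$j)) UNIV * L2_set (\<lambda>j. norm (w$j)) UNIV"
      using L2_set_mult_ineq[of "\<lambda>j. norm (B$i$j)" "\<lambda>j. norm (w$j)" UNIV] by (simp only: abs_norm_cancel)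
    finally show ?thesis by (simp only: norm_vec_def)
  qed
  then have "norm (B *v w) \<le> L2_set (\<lambda>i. norm (B $ i) * norm w) UNIV"
    unfolding norm_vec_def[of "B *v w"] by (intro L2_set_mono) auto
  also have "\<dots> = norm B * norm w"
    using L2_set_right_distrib[of "norm w" "\<lambda>i. norm (B $ i)" UNIV]
    by (simp add: norm_vec_def[of B] mult.commute)
  finally show ?thesis .
qed

lemma norm_adj: "norm (adjoint_mat (B::complex^'n^'m)) = norm B"
proof -
  have "norm (adjoint_mat B) ^ 2 = norm B ^ 2"
    unfolding norm_sq_vec[of "adjoint_mat B"] norm_sq_vec[of B] adjoint_mat_def vec_lambda_beta
    unfolding norm_sq_vec by (simp only: vec_lambda_beta complex_mod_cnj) (rule sum.swap)
  then show ?thesis by (simp add: power2_eq_iff_nonneg)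
qed

lemma norm_tr: "norm (transpose (B::complex^'n^'m)) = norm B"
proof -
  have "norm (transpose B) ^ 2 = norm B ^ 2"
    unfolding norm_sq_vec[of "transpose B"] norm_sq_vec[of B] transpose_def vec_lambda_beta
    unfolding norm_sq_vec by (simp only: vec_lambda_beta) (rule sum.swap)
  then show ?thesis by (simp add: power2_eq_iff_nonneg)
qed

lemma norm_adj_mv: "norm (adjoint_mat (B::complex^'n^'m) *v w) \<le> norm B * norm w"
  using norm_mv_le[of "adjoint_mat B" w] norm_adj[of B] by simp

lemma norm_mm_le: "norm ((A::complex^'n^'m) ** (B::complex^'k^'n)) \<le> norm A * norm B"
proof -
  have r: "(A ** B) $ i = transpose B *v (A $ i)" for i
    by (simp add: vec_eq_iff matrix_matrix_mult_def matrix_vector_mult_def transpose_def mult.commute)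
  have "norm (A ** B) \<le> L2_set (\<lambda>i. norm B * norm (A $ i)) UNIV"
    unfolding norm_vec_def[of "A ** B"] r
    by (intro L2_set_mono) (use norm_mv_le[of "transpose B"] norm_tr[of B] in auto)
  also have "\<dots> = norm A * norm B"
    using L2_set_right_distrib[of "norm B" "\<lambda>i. norm (A $ i)" UNIV]
    by (simp add: norm_vec_def[of A] mult.commute)
  finally show ?thesis .
qed

lemma psf: "prob_space A \<Longrightarrow> prob_space B \<Longrightarrow> pair_sigma_finite A B"
  by (simp add: pair_sigma_finite_def prob_space_imp_sigma_finite)

lemma prod_integrable:
  fixes f :: "'a \<Rightarrow> real" and g :: "'b \<Rightarrow> real"
  assumes M: "prob_space M" and N: "prob_space N"
    and f: "integrable M f" and g: "integrable N g"
  shows "integrable (M \<Otimes>\<^sub>M N) (\<lambda>(a,b). f a * g b)"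
proof -
  interpret N: prob_space N by fact
  interpret MN: pair_sigma_finite M N using psf[OF M N] .
  have [measurable]: "f \<in> borel_measurable M" "g \<in> borel_measurable N" using f g by auto
  have "(\<integral>\<^sup>+ p. ennreal (norm ((\<lambda>(a,b). f a * g b) p)) \<partial>(M \<Otimes>\<^sub>M N))
        = (\<integral>\<^sup>+ a. \<integral>\<^sup>+ b. ennreal (norm (f a)) * ennreal (norm (g b)) \<partial>N \<partial>M)"
    by (subst N.nn_integral_fst[symmetric]) (auto simp: abs_mult ennreal_mult)
  also have "\<dots> = (\<integral>\<^sup>+ a. ennreal (norm (f a)) * (\<integral>\<^sup>+ b. ennreal (norm (g b)) \<partial>N) \<partial>M)"
    by (simp add: nn_integral_cmult)
  also have "\<dots> = (\<integral>\<^sup>+ a. ennreal (norm (f a)) \<partial>M) * (\<integral>\<^sup>+ b. ennreal (norm (g b)) \<partial>N)"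
    by (simp add: nn_integral_multc)
  also have "\<dots> < \<infinity>"
    using f g unfolding integrable_iff_bounded by (simp add: ennreal_mult_less_top)
  finally show ?thesis by (simp add: integrable_iff_bounded)
qed

lemma lift_fst:
  fixes h :: "'a \<Rightarrow> 'c::{banach,second_countable_topology}"
  assumes M: "prob_space M" and N: "prob_space N" and h: "integrable M h"
  shows "integrable (M \<Otimes>\<^sub>M N) (\<lambda>(a,b). h a)"
    and "integral\<^sup>L (M \<Otimes>\<^sub>M N) (\<lambda>(a,b). h a) = integral\<^sup>L M h"
proof -
  interpret N: prob_space N by fact
  interpret MN: pair_sigma_finite M N using psf[OF M N] .
  have [measurable]: "h \<in> borel_measurable M" using h by auto
  have "(\<integral>\<^sup>+ p. ennreal (norm ((\<lambda>(a,b). h a) p)) \<partial>(M \<Otimes>\<^sub>M N))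
        = (\<integral>\<^sup>+ a. \<integral>\<^sup>+ b. ennreal (norm (h a)) \<partial>N \<partial>M)"
    by (subst N.nn_integral_fst[symmetric]) auto
  also have "\<dots> = (\<integral>\<^sup>+ a. ennreal (norm (h a)) \<partial>M)"
    by (simp add: N.emeasure_space_1)
  also have "\<dots> < \<infinity>"
    using h unfolding integrable_iff_bounded by simp
  finally show I: "integrable (M \<Otimes>\<^sub>M N) (\<lambda>(a,b). h a)" by (simp add: integrable_iff_bounded)
  show "integral\<^sup>L (M \<Otimes>\<^sub>M N) (\<lambda>(a,b). h a) = integral\<^sup>L M h"
    using MN.integral_fst'[OF I] by (simp add: N.prob_space)
qed

lemma lift_snd:
  fixes h :: "'b \<Rightarrow> 'c::{banach,second_countable_topology}"
  assumes M: "prob_space M" and N: "prob_space N" and h: "integrable N h"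
  shows "integrable (M \<Otimes>\<^sub>M N) (\<lambda>(a,b). h b)"
    and "integral\<^sup>L (M \<Otimes>\<^sub>M N) (\<lambda>(a,b). h b) = integral\<^sup>L N h"
proof -
  interpret M: prob_space M by fact
  interpret N: prob_space N by fact
  interpret MN: pair_sigma_finite M N using psf[OF M N] .
  have [measurable]: "h \<in> borel_measurable N" using h by auto
  have "(\<integral>\<^sup>+ p. ennreal (norm ((\<lambda>(a,b). h b) p)) \<partial>(M \<Otimes>\<^sub>M N))
        = (\<integral>\<^sup>+ a. \<integral>\<^sup>+ b. ennreal (norm (h b)) \<partial>N \<partial>M)"
    by (subst N.nn_integral_fst[symmetric]) auto
  also have "\<dots> = (\<integral>\<^sup>+ b. ennreal (norm (h b)) \<partial>N)"
    by (simp add: M.emeasure_space_1)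
  also have "\<dots> < \<infinity>"
    using h unfolding integrable_iff_bounded by simp
  finally show I: "integrable (M \<Otimes>\<^sub>M N) (\<lambda>(a,b). h b)" by (simp add: integrable_iff_bounded)
  show "integral\<^sup>L (M \<Otimes>\<^sub>M N) (\<lambda>(a,b). h b) = integral\<^sup>L N h"
    using MN.integral_fst'[OF I] by (simp add: M.prob_space)
qed

lemma iter2:
  fixes f g :: "_ \<Rightarrow> 'c::{banach,second_countable_topology}"
  assumes "pair_sigma_finite M1 M2" "integrable (M1 \<Otimes>\<^sub>M M2) f" "integrable (M1 \<Otimes>\<^sub>M M2) g"
    and "AE a in M1. integral\<^sup>L M2 (\<lambda>b. f (a,b)) = integral\<^sup>L M2 (\<lambda>b. g (a,b))"
  shows "integral\<^sup>L (M1 \<Otimes>\<^sub>M M2) f = integral\<^sup>L (M1 \<Otimes>\<^sub>M M2) g"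
proof -
  have "integral\<^sup>L (M1 \<Otimes>\<^sub>M M2) f = (\<integral>a. (\<integral>b. f (a, b) \<partial>M2) \<partial>M1)"
    using pair_sigma_finite.integral_fst'[OF assms(1,2)] by simp
  also have "\<dots> = (\<integral>a. (\<integral>b. g (a, b) \<partial>M2) \<partial>M1)"
    by (rule integral_cong_AE)
       (use assms(4) borel_measurable_integrable[OF pair_sigma_finite.integrable_fst'[OF assms(1,2)]]
         borel_measurable_integrable[OF pair_sigma_finite.integrable_fst'[OF assms(1,3)]] in auto)
  also have "\<dots> = integral\<^sup>L (M1 \<Otimes>\<^sub>M M2) g"
    using pair_sigma_finite.integral_fst'[OF assms(1,3)] by simp
  finally show ?thesis .
qed

lemma inner:
  fixes Q :: "(complex^'n^'m) measure" and R :: "(complex^'m) measure"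
    and K :: "complex^'m \<Rightarrow> complex^'p^'n" and v :: "complex^'m \<Rightarrow> complex^'n"
    and Gm :: "complex^'n^'m \<Rightarrow> complex^'n^'n" and Hm :: "complex^'n^'m \<Rightarrow> complex^'m^'n"
  assumes Q: "prob_space Q" and R: "prob_space R"
    and K[measurable]: "K \<in> borel_measurable R" and v[measurable]: "v \<in> borel_measurable R"
    and Gm[measurable]: "Gm \<in> borel_measurable Q" and Hm[measurable]: "Hm \<in> borel_measurable Q"
    and iK: "integrable R (\<lambda>e. norm (K e))" and iKv: "integrable R (\<lambda>e. norm (K e) * norm (v e))"
    and bG: "AE M in Q. norm (Gm M) \<le> cg" and bH: "AE M in Q. norm (Hm M) \<le> ch"
    and EG: "integral\<^sup>L Q Gm = mat 1"
    and sR: "sets R = sets borel" and iR: "integrable R (\<lambda>e. e)" and ER: "integral\<^sup>L R (\<lambda>e. e) = 0"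
  shows "integral\<^sup>L (Q \<Otimes>\<^sub>M (R \<Otimes>\<^sub>M R))
           (\<lambda>(M', e, e'). adjoint_mat (K e) *v (Gm M' *v v e) - adjoint_mat (K e) *v (Hm M' *v e'))
       = integral\<^sup>L (Q \<Otimes>\<^sub>M (R \<Otimes>\<^sub>M R)) (\<lambda>(M', e, e'). adjoint_mat (K e) *v v e)"
proof -
  interpret Q: prob_space Q by fact
  interpret R: prob_space R by fact
  have RR: "prob_space (R \<Otimes>\<^sub>M R)" by (rule prob_space_pair[OF R R])
  interpret RR: prob_space "R \<Otimes>\<^sub>M R" by fact
  interpret QRR: pair_sigma_finite Q "R \<Otimes>\<^sub>M R" by (rule psf[OF Q RR])
  interpret R2: pair_sigma_finite R R by (rule psf[OF R R])
  have [measurable]: "(\<lambda>x. x) \<in> borel_measurable R" by (rule measurable_ident_sets[OF sR])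
  let ?S = "Q \<Otimes>\<^sub>M (R \<Otimes>\<^sub>M R)"
  define f1 where "f1 = (\<lambda>p::(complex^'n^'m) \<times> (complex^'m) \<times> (complex^'m). adjoint_mat (K (fst (snd p))) *v (Gm (fst p) *v v (fst (snd p))))"
  define f2 where "f2 = (\<lambda>p::(complex^'n^'m) \<times> (complex^'m) \<times> (complex^'m). adjoint_mat (K (fst (snd p))) *v (Hm (fst p) *v snd (snd p)))"
  define g where "g = (\<lambda>p::(complex^'n^'m) \<times> (complex^'m) \<times> (complex^'m). adjoint_mat (K (fst (snd p))) *v v (fst (snd p)))"
  have [measurable]: "f1 \<in> borel_measurable ?S" "f2 \<in> borel_measurable ?S" "g \<in> borel_measurable ?S"
    unfolding f1_def f2_def g_def by (rule borel_measurable_mv; measurable)+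
  have iRn: "integrable R (\<lambda>e. norm e)" using iR by (rule integrable_norm)
  have d1: "integrable ?S (\<lambda>(M', e, e'). cg * (norm (K e) * norm (v e)))"
  proof -
    have "integrable (R \<Otimes>\<^sub>M R) (\<lambda>(e, e'). cg * (norm (K e) * norm (v e)))"
      using lift_fst(1)[OF R R integrable_mult_right[OF iKv, of cg]] by simp
    from lift_snd(1)[OF Q RR this] show ?thesis by (simp add: case_prod_beta')
  qed
  have d2: "integrable ?S (\<lambda>(M', e, e'). ch * (norm (K e) * norm e'))"
  proof -
    have "integrable (R \<Otimes>\<^sub>M R) (\<lambda>(e, e'). norm (K e) * norm e')"
      using prod_integrable[OF R R iK iRn] by simp
    then have "integrable (R \<Otimes>\<^sub>M R) (\<lambda>(e, e'). ch * (norm (K e) * norm e'))"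
      using integrable_mult_right[of ch] by (simp add: case_prod_beta')
    from lift_snd(1)[OF Q RR this] show ?thesis by (simp add: case_prod_beta')
  qed
  have AES: "AE p in ?S. norm (Gm (fst p)) \<le> cg \<and> norm (Hm (fst p)) \<le> ch"
  proof (rule QRR.AE_pair_measure)
    show "{x \<in> space ?S. norm (Gm (fst x)) \<le> cg \<and> norm (Hm (fst x)) \<le> ch} \<in> sets ?S"
      by measurable
    show "AE x in Q. AE y in R \<Otimes>\<^sub>M R. norm (Gm (fst (x, y))) \<le> cg \<and> norm (Hm (fst (x, y))) \<le> ch"
      using bG bH by eventually_elim auto
  qed
  have i1: "integrable ?S f1"
  proof (rule Bochner_Integration.integrable_bound[OF d1])
    show "AE p in ?S. norm (f1 p) \<le> norm ((\<lambda>(M', e, e'). cg * (norm (K e) * norm (v e))) p)"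
      using AES
    proof eventually_elim
      case (elim p)
      obtain M' e e' where p: "p = (M', e, e')" by (cases p) auto
      have "norm (f1 p) \<le> norm (K e) * norm (Gm M' *v v e)"
        unfolding p f1_def by (simp add: norm_adj_mv)
      also have "\<dots> \<le> norm (K e) * (norm (Gm M') * norm (v e))"
        by (intro mult_left_mono norm_mv_le) auto
      also have "\<dots> \<le> norm (K e) * (cg * norm (v e))"
        using elim p by (intro mult_left_mono mult_right_mono) auto
      also have "\<dots> \<le> norm ((\<lambda>(M', e, e'). cg * (norm (K e) * norm (v e))) p)"
        unfolding p by (simp add: algebra_simps)
      finally show ?case .
    qed
  qed measurable
  have i2: "integrable ?S f2"
  proof (rule Bochner_Integration.integrable_bound[OF d2])
    show "AE p in ?S. norm (f2 p) \<le> norm ((\<lambda>(M', e, e'). ch * (norm (K e) * norm e')) p)"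
      using AES
    proof eventually_elim
      case (elim p)
      obtain M' e e' where p: "p = (M', e, e')" by (cases p) auto
      have "norm (f2 p) \<le> norm (K e) * norm (Hm M' *v e')"
        unfolding p f2_def by (simp add: norm_adj_mv)
      also have "\<dots> \<le> norm (K e) * (norm (Hm M') * norm e')"
        by (intro mult_left_mono norm_mv_le) auto
      also have "\<dots> \<le> norm (K e) * (ch * norm e')"
        using elim p by (intro mult_left_mono mult_right_mono) auto
      also have "\<dots> \<le> norm ((\<lambda>(M', e, e'). ch * (norm (K e) * norm e')) p)"
        unfolding p by (simp add: algebra_simps)
      finally show ?case .
    qed
  qed measurable
  have ig0: "integrable R (\<lambda>e. adjoint_mat (K e) *v v e)"
    by (rule Bochner_Integration.integrable_bound[OF iKv]) (auto simp: norm_adj_mv)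
  have igRR: "integrable (R \<Otimes>\<^sub>M R) (\<lambda>(e, e'). adjoint_mat (K e) *v v e)"
    by (rule lift_fst(1)[OF R R ig0])
  have ig: "integrable ?S g"
    unfolding g_def using lift_snd(1)[OF Q RR igRR] by (simp add: case_prod_beta')
  have Ig: "integral\<^sup>L ?S g = integral\<^sup>L (R \<Otimes>\<^sub>M R) (\<lambda>(e, e'). adjoint_mat (K e) *v v e)"
    unfolding g_def using lift_snd(2)[OF Q RR igRR] by (simp add: case_prod_beta')
  have I2: "integral\<^sup>L ?S f2 = 0"
  proof -
    have "integral\<^sup>L (R \<Otimes>\<^sub>M R) (\<lambda>p::(complex^'m) \<times> (complex^'m). f2 (M', p)) = 0" for M'
    proof -
      have b: "bounded_linear (\<lambda>w. adjoint_mat (K e) *v (Hm M' *v w))" for e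
        by (intro bounded_linear_compose[OF matrix_vector_mul_bounded_linear matrix_vector_mul_bounded_linear])
      have iKH: "integrable R (\<lambda>e. norm (Hm M') * norm (K e))"
        using integrable_mult_right[OF iK, of "norm (Hm M')"] .
      have int: "integrable (R \<Otimes>\<^sub>M R) (\<lambda>p::(complex^'m) \<times> (complex^'m). f2 (M', p))"
      proof (rule Bochner_Integration.integrable_bound[OF prod_integrable[OF R R iKH iRn]])
        show "AE p in R \<Otimes>\<^sub>M R. norm (f2 (M', p)) \<le> norm ((\<lambda>(a, b). norm (Hm M') * norm (K a) * norm b) p)"
        proof (rule AE_I2)
          fix p :: "(complex^'m) \<times> (complex^'m)"
          obtain e e' where p: "p = (e, e')" by (cases p) auto
          have "norm (f2 (M', p)) \<le> norm (K e) * norm (Hm M' *v e')"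
            unfolding p f2_def by (simp add: norm_adj_mv)
          also have "\<dots> \<le> norm (K e) * (norm (Hm M') * norm e')"
            by (intro mult_left_mono norm_mv_le) auto
          finally show "norm (f2 (M', p)) \<le> norm ((\<lambda>(a, b). norm (Hm M') * norm (K a) * norm b) p)"
            unfolding p by (simp add: algebra_simps)
        qed
      qed (simp only: f2_def fst_conv snd_conv, rule borel_measurable_mv; measurable)
      have "integral\<^sup>L (R \<Otimes>\<^sub>M R) (\<lambda>p::(complex^'m) \<times> (complex^'m). f2 (M', p)) = (\<integral>e. (\<integral>e'. f2 (M', e, e') \<partial>R) \<partial>R)"
        using R2.integral_fst'[OF int] by simp
      also have "\<dots> = (\<integral>e. 0 \<partial>R)"
      proof (rule Bochner_Integration.integral_cong[OF refl])
        fix e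
        have "(\<integral>e'. f2 (M', e, e') \<partial>R) = adjoint_mat (K e) *v (Hm M' *v integral\<^sup>L R (\<lambda>e. e))"
          unfolding f2_def using integral_bounded_linear[OF b iR] by simp
        then show "(\<integral>e'. f2 (M', e, e') \<partial>R) = 0" by (simp add: ER)
      qed
      finally show ?thesis by simp
    qed
    then show ?thesis using QRR.integral_fst'[OF i2] by simp
  qed
  have iGm: "integrable Q Gm" by (rule Q.integrable_const_bound[OF bG]) measurable
  have I1: "integral\<^sup>L ?S f1 = integral\<^sup>L (R \<Otimes>\<^sub>M R) (\<lambda>(e, e'). adjoint_mat (K e) *v v e)"
  proof -
    have i1': "integrable ?S (case_prod (\<lambda>M' p. f1 (M', p)))" using i1 by simp
    have "integral\<^sup>L ?S f1 = (\<integral>M'. (\<integral>p. f1 (M', p) \<partial>(R \<Otimes>\<^sub>M R)) \<partial>Q)"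
      using QRR.integral_fst'[OF i1] by simp
    also have "\<dots> = (\<integral>p. (\<integral>M'. f1 (M', p) \<partial>Q) \<partial>(R \<Otimes>\<^sub>M R))"
      using QRR.Fubini_integral[OF i1'] by simp
    also have "\<dots> = (\<integral>p. (\<lambda>(e, e'). adjoint_mat (K e) *v v e) p \<partial>(R \<Otimes>\<^sub>M R))"
    proof (rule Bochner_Integration.integral_cong[OF refl])
      fix p :: "(complex^'m) \<times> (complex^'m)"
      obtain e e' where p: "p = (e, e')" by (cases p) auto
      have b: "bounded_linear (\<lambda>Z. adjoint_mat (K e) *v (Z *v v e))"
        by (intro bounded_linear_compose[OF matrix_vector_mul_bounded_linear bl_mv_left])
      show "(\<integral>M'. f1 (M', p) \<partial>Q) = (\<lambda>(e, e'). adjoint_mat (K e) *v v e) p"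
        unfolding p f1_def using integral_bounded_linear[OF b iGm] by (simp add: EG)
    qed
    finally show ?thesis by simp
  qed
  have "integral\<^sup>L ?S (\<lambda>(M', e, e'). adjoint_mat (K e) *v (Gm M' *v v e) - adjoint_mat (K e) *v (Hm M' *v e'))
      = integral\<^sup>L ?S (\<lambda>p. f1 p - f2 p)"
    unfolding f1_def f2_def by (simp add: case_prod_beta')
  also have "\<dots> = integral\<^sup>L ?S f1 - integral\<^sup>L ?S f2"
    by (rule Bochner_Integration.integral_diff[OF i1 i2])
  also have "\<dots> = integral\<^sup>L ?S g" using I1 I2 Ig by simp
  finally show ?thesis unfolding g_def by (simp add: case_prod_beta')
qed

lemma lift5:
  fixes X :: "'x measure" and Q :: "'q measure" and R :: "'r measure"
    and h :: "'x \<times> 'q \<times> 'r \<Rightarrow> real" and \<phi> :: "'r \<Rightarrow> real"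
  assumes X: "prob_space X" and Q: "prob_space Q" and R: "prob_space R"
    and [simp]: "space X = UNIV" "space Q = UNIV" "space R = UNIV"
    and h: "integrable (X \<Otimes>\<^sub>M Q \<Otimes>\<^sub>M R) h"
    and \<phi>: "integrable R \<phi>"
  shows "integrable (X \<Otimes>\<^sub>M Q \<Otimes>\<^sub>M Q \<Otimes>\<^sub>M R \<Otimes>\<^sub>M R) (\<lambda>(x, M, M', e, e'). h (x, M, e) * \<phi> e')"
proof -
  interpret X: prob_space X by fact
  interpret Q: prob_space Q by fact
  interpret R: prob_space R by fact
  have RR: "prob_space (R \<Otimes>\<^sub>M R)" by (rule prob_space_pair[OF R R])
  have S: "prob_space (Q \<Otimes>\<^sub>M R \<Otimes>\<^sub>M R)" by (rule prob_space_pair[OF Q RR])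
  have QS: "prob_space (Q \<Otimes>\<^sub>M Q \<Otimes>\<^sub>M R \<Otimes>\<^sub>M R)" by (rule prob_space_pair[OF Q S])
  have QR: "prob_space (Q \<Otimes>\<^sub>M R)" by (rule prob_space_pair[OF Q R])
  interpret RR: prob_space "R \<Otimes>\<^sub>M R" by fact
  interpret S: prob_space "Q \<Otimes>\<^sub>M R \<Otimes>\<^sub>M R" by fact
  interpret QS: prob_space "Q \<Otimes>\<^sub>M Q \<Otimes>\<^sub>M R \<Otimes>\<^sub>M R" by fact
  interpret QR: prob_space "Q \<Otimes>\<^sub>M R" by fact
  have hm[measurable]: "h \<in> borel_measurable (X \<Otimes>\<^sub>M Q \<Otimes>\<^sub>M R)" using h by auto
  have [measurable]: "\<phi> \<in> borel_measurable R" using \<phi> by auto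
  let ?c = "\<integral>\<^sup>+ e'. ennreal (norm (\<phi> e')) \<partial>R"
  have c: "?c < \<infinity>" using \<phi> unfolding integrable_iff_bounded by simp
  define F0 where "F0 = (\<lambda>\<omega>::'x \<times> 'q \<times> 'q \<times> 'r \<times> 'r. ennreal (norm (h (fst \<omega>, fst (snd \<omega>), fst (snd (snd (snd \<omega>))))))
                          * ennreal (norm (\<phi> (snd (snd (snd (snd \<omega>)))))))"
  have D: "integral\<^sup>N (R \<Otimes>\<^sub>M R) (\<lambda>w. F0 (x, M, M', w)) = (\<integral>\<^sup>+ e. \<integral>\<^sup>+ e'. ennreal (norm (h (x, M, e))) * ennreal (norm (\<phi> e')) \<partial>R \<partial>R)" for x M M'
    by (subst R.nn_integral_fst[symmetric]) (simp_all add: F0_def)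
  have C: "integral\<^sup>N (Q \<Otimes>\<^sub>M R \<Otimes>\<^sub>M R) (\<lambda>z. F0 (x, M, z)) = (\<integral>\<^sup>+ M'. integral\<^sup>N (R \<Otimes>\<^sub>M R) (\<lambda>w. F0 (x, M, M', w)) \<partial>Q)" for x M
    by (rule RR.nn_integral_fst[symmetric]) (simp add: F0_def)
  have B: "integral\<^sup>N (Q \<Otimes>\<^sub>M Q \<Otimes>\<^sub>M R \<Otimes>\<^sub>M R) (\<lambda>y. F0 (x, y)) = (\<integral>\<^sup>+ M. integral\<^sup>N (Q \<Otimes>\<^sub>M R \<Otimes>\<^sub>M R) (\<lambda>z. F0 (x, M, z)) \<partial>Q)" for x
    by (rule S.nn_integral_fst[symmetric]) (simp add: F0_def)
  have A: "integral\<^sup>N (X \<Otimes>\<^sub>M Q \<Otimes>\<^sub>M Q \<Otimes>\<^sub>M R \<Otimes>\<^sub>M R) F0 = (\<integral>\<^sup>+ x. integral\<^sup>N (Q \<Otimes>\<^sub>M Q \<Otimes>\<^sub>M R \<Otimes>\<^sub>M R) (\<lambda>y. F0 (x, y)) \<partial>X)"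
    by (rule QS.nn_integral_fst[symmetric]) (simp add: F0_def)
  have "(\<integral>\<^sup>+ \<omega>. ennreal (norm ((\<lambda>(x, M, M', e, e'). h (x, M, e) * \<phi> e') \<omega>)) \<partial>(X \<Otimes>\<^sub>M Q \<Otimes>\<^sub>M Q \<Otimes>\<^sub>M R \<Otimes>\<^sub>M R))
      = integral\<^sup>N (X \<Otimes>\<^sub>M Q \<Otimes>\<^sub>M Q \<Otimes>\<^sub>M R \<Otimes>\<^sub>M R) F0"
    by (rule nn_integral_cong) (simp add: F0_def split_beta' abs_mult ennreal_mult)
  also have "\<dots> = (\<integral>\<^sup>+ x. \<integral>\<^sup>+ M. \<integral>\<^sup>+ M'. \<integral>\<^sup>+ e. \<integral>\<^sup>+ e'. ennreal (norm (h (x, M, e))) * ennreal (norm (\<phi> e')) \<partial>R \<partial>R \<partial>Q \<partial>Q \<partial>X)"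
    unfolding A B C D ..
  also have "\<dots> = (\<integral>\<^sup>+ x. \<integral>\<^sup>+ M. \<integral>\<^sup>+ e. ennreal (norm (h (x, M, e))) * ?c \<partial>R \<partial>Q \<partial>X)"
    using Q.emeasure_space_1 by (simp add: nn_integral_cmult)
  also have "\<dots> = (\<integral>\<^sup>+ x. \<integral>\<^sup>+ M. \<integral>\<^sup>+ e. ennreal (norm (h (x, M, e))) \<partial>R \<partial>Q \<partial>X) * ?c"
    by (simp add: nn_integral_multc)
  also have "\<dots> = (\<integral>\<^sup>+ \<omega>. ennreal (norm (h \<omega>)) \<partial>(X \<Otimes>\<^sub>M Q \<Otimes>\<^sub>M R)) * ?c"
  proof -
    have "(\<integral>\<^sup>+ \<omega>. ennreal (norm (h \<omega>)) \<partial>(X \<Otimes>\<^sub>M Q \<Otimes>\<^sub>M R)) = (\<integral>\<^sup>+ x. \<integral>\<^sup>+ y. ennreal (norm (h (x, y))) \<partial>(Q \<Otimes>\<^sub>M R) \<partial>X)"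
      by (rule QR.nn_integral_fst[symmetric]) measurable
    also have "\<dots> = (\<integral>\<^sup>+ x. \<integral>\<^sup>+ M. \<integral>\<^sup>+ e. ennreal (norm (h (x, M, e))) \<partial>R \<partial>Q \<partial>X)"
      by (rule nn_integral_cong, rule R.nn_integral_fst[symmetric]) measurable
    finally show ?thesis by simp
  qed
  also have "\<dots> < \<infinity>"
    using h c unfolding integrable_iff_bounded by (simp add: ennreal_mult_less_top)
  finally show ?thesis unfolding integrable_iff_bounded by simp
qed

lemma outer:
  fixes X :: "(complex^'n) measure" and Q :: "(complex^'n^'m) measure" and R :: "(complex^'m) measure"
    and K :: "(complex^'n) \<times> (complex^'n^'m) \<times> (complex^'m) \<Rightarrow> complex^'p^'n"
    and v :: "(complex^'n) \<times> (complex^'n^'m) \<times> (complex^'m) \<Rightarrow> complex^'n"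
    and Gm :: "complex^'n^'m \<Rightarrow> complex^'n^'n" and Hm :: "complex^'n^'m \<Rightarrow> complex^'m^'n"
  assumes X: "prob_space X" and Q: "prob_space Q" and R: "prob_space R"
    and sX: "sets X = sets borel" and sQ: "sets Q = sets borel" and sR: "sets R = sets borel"
    and K[measurable]: "K \<in> borel_measurable (X \<Otimes>\<^sub>M Q \<Otimes>\<^sub>M R)"
    and v[measurable]: "v \<in> borel_measurable (X \<Otimes>\<^sub>M Q \<Otimes>\<^sub>M R)"
    and Gm[measurable]: "Gm \<in> borel_measurable Q" and Hm[measurable]: "Hm \<in> borel_measurable Q"
    and iK: "integrable (X \<Otimes>\<^sub>M Q \<Otimes>\<^sub>M R) (\<lambda>\<omega>. norm (K \<omega>))"
    and iKv: "integrable (X \<Otimes>\<^sub>M Q \<Otimes>\<^sub>M R) (\<lambda>\<omega>. norm (K \<omega>) * norm (v \<omega>))"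
    and bG: "AE M in Q. norm (Gm M) \<le> cg" and bH: "AE M in Q. norm (Hm M) \<le> ch"
    and EG: "integral\<^sup>L Q Gm = mat 1"
    and iR: "integrable R (\<lambda>e. e)" and ER: "integral\<^sup>L R (\<lambda>e. e) = 0"
  shows "integral\<^sup>L (X \<Otimes>\<^sub>M Q \<Otimes>\<^sub>M Q \<Otimes>\<^sub>M R \<Otimes>\<^sub>M R)
           (\<lambda>(x, M, M', e, e'). adjoint_mat (K (x, M, e)) *v (Gm M' *v v (x, M, e))
                               - adjoint_mat (K (x, M, e)) *v (Hm M' *v e'))
       = integral\<^sup>L (X \<Otimes>\<^sub>M Q \<Otimes>\<^sub>M Q \<Otimes>\<^sub>M R \<Otimes>\<^sub>M R)
           (\<lambda>(x, M, M', e, e'). adjoint_mat (K (x, M, e)) *v v (x, M, e))"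
proof -
  interpret X: prob_space X by fact
  interpret Q: prob_space Q by fact
  interpret R: prob_space R by fact
  have RR: "prob_space (R \<Otimes>\<^sub>M R)" by (rule prob_space_pair[OF R R])
  have S: "prob_space (Q \<Otimes>\<^sub>M R \<Otimes>\<^sub>M R)" by (rule prob_space_pair[OF Q RR])
  have QS: "prob_space (Q \<Otimes>\<^sub>M Q \<Otimes>\<^sub>M R \<Otimes>\<^sub>M R)" by (rule prob_space_pair[OF Q S])
  have QR: "prob_space (Q \<Otimes>\<^sub>M R)" by (rule prob_space_pair[OF Q R])
  interpret XQS: pair_sigma_finite X "Q \<Otimes>\<^sub>M Q \<Otimes>\<^sub>M R \<Otimes>\<^sub>M R" by (rule psf[OF X QS])
  interpret QS': pair_sigma_finite Q "Q \<Otimes>\<^sub>M R \<Otimes>\<^sub>M R" by (rule psf[OF Q S])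
  interpret SS: pair_sigma_finite Q "R \<Otimes>\<^sub>M R" by (rule psf[OF Q RR])
  interpret XQR: pair_sigma_finite X "Q \<Otimes>\<^sub>M R" by (rule psf[OF X QR])
  interpret QR': pair_sigma_finite Q R by (rule psf[OF Q R])
  have spX[simp]: "space X = UNIV" using sets_eq_imp_space_eq[OF sX] by simp
  have spQ[simp]: "space Q = UNIV" using sets_eq_imp_space_eq[OF sQ] by simp
  have spR[simp]: "space R = UNIV" using sets_eq_imp_space_eq[OF sR] by simp
  have [measurable]: "(\<lambda>x. x) \<in> borel_measurable R" by (rule measurable_ident_sets[OF sR])
  let ?\<Omega> = "X \<Otimes>\<^sub>M Q \<Otimes>\<^sub>M Q \<Otimes>\<^sub>M R \<Otimes>\<^sub>M R"
  let ?S = "Q \<Otimes>\<^sub>M R \<Otimes>\<^sub>M R"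
  define F where "F = (\<lambda>\<omega>::(complex^'n) \<times> (complex^'n^'m) \<times> (complex^'n^'m) \<times> (complex^'m) \<times> (complex^'m).
      adjoint_mat (K (fst \<omega>, fst (snd \<omega>), fst (snd (snd (snd \<omega>)))))
        *v (Gm (fst (snd (snd \<omega>))) *v v (fst \<omega>, fst (snd \<omega>), fst (snd (snd (snd \<omega>)))))
      - adjoint_mat (K (fst \<omega>, fst (snd \<omega>), fst (snd (snd (snd \<omega>)))))
        *v (Hm (fst (snd (snd \<omega>))) *v snd (snd (snd (snd \<omega>)))))"
  define G where "G = (\<lambda>\<omega>::(complex^'n) \<times> (complex^'n^'m) \<times> (complex^'n^'m) \<times> (complex^'m) \<times> (complex^'m).
      adjoint_mat (K (fst \<omega>, fst (snd \<omega>), fst (snd (snd (snd \<omega>)))))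
        *v v (fst \<omega>, fst (snd \<omega>), fst (snd (snd (snd \<omega>)))))"
  have Fm[measurable]: "F \<in> borel_measurable ?\<Omega>"
    unfolding F_def by (rule borel_measurable_diff; rule borel_measurable_mv; measurable)
  have Gm'[measurable]: "G \<in> borel_measurable ?\<Omega>"
    unfolding G_def by (rule borel_measurable_mv; measurable)
  have AE_S: "AE z in ?S. norm (Gm (fst z)) \<le> cg \<and> norm (Hm (fst z)) \<le> ch"
  proof (rule SS.AE_pair_measure)
    show "{x \<in> space ?S. norm (Gm (fst x)) \<le> cg \<and> norm (Hm (fst x)) \<le> ch} \<in> sets ?S"
      by measurable
    show "AE x in Q. AE y in R \<Otimes>\<^sub>M R. norm (Gm (fst (x, y))) \<le> cg \<and> norm (Hm (fst (x, y))) \<le> ch"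
      using bG bH by eventually_elim auto
  qed
  have AE_QS: "AE y in Q \<Otimes>\<^sub>M ?S. norm (Gm (fst (snd y))) \<le> cg \<and> norm (Hm (fst (snd y))) \<le> ch"
  proof (rule QS'.AE_pair_measure)
    show "{x \<in> space (Q \<Otimes>\<^sub>M ?S). norm (Gm (fst (snd x))) \<le> cg \<and> norm (Hm (fst (snd x))) \<le> ch} \<in> sets (Q \<Otimes>\<^sub>M ?S)"
      by measurable
    show "AE x in Q. AE y in ?S. norm (Gm (fst (snd (x, y)))) \<le> cg \<and> norm (Hm (fst (snd (x, y)))) \<le> ch"
      using AE_S by simp
  qed
  have AE_\<Omega>: "AE \<omega> in ?\<Omega>. norm (Gm (fst (snd (snd \<omega>)))) \<le> cg \<and> norm (Hm (fst (snd (snd \<omega>)))) \<le> ch"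
  proof (rule XQS.AE_pair_measure)
    show "{x \<in> space ?\<Omega>. norm (Gm (fst (snd (snd x)))) \<le> cg \<and> norm (Hm (fst (snd (snd x)))) \<le> ch} \<in> sets ?\<Omega>"
      by measurable
    show "AE x in X. AE y in Q \<Otimes>\<^sub>M ?S. norm (Gm (fst (snd (snd (x, y))))) \<le> cg \<and> norm (Hm (fst (snd (snd (x, y))))) \<le> ch"
      using AE_QS by simp
  qed
  have iKv': "integrable (X \<Otimes>\<^sub>M Q \<Otimes>\<^sub>M R) (\<lambda>\<omega>. cg * (norm (K \<omega>) * norm (v \<omega>)))"
    using integrable_mult_right[OF iKv, of cg] .
  have iK': "integrable (X \<Otimes>\<^sub>M Q \<Otimes>\<^sub>M R) (\<lambda>\<omega>. ch * norm (K \<omega>))"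
    using integrable_mult_right[OF iK, of ch] .
  have d1: "integrable ?\<Omega> (\<lambda>(x, M, M', e, e'). cg * (norm (K (x, M, e)) * norm (v (x, M, e))) * 1)"
    by (rule lift5[OF X Q R spX spQ spR iKv']) simp
  have d2: "integrable ?\<Omega> (\<lambda>(x, M, M', e, e'). ch * norm (K (x, M, e)) * norm e')"
    by (rule lift5[OF X Q R spX spQ spR iK' integrable_norm[OF iR]])
  have d3: "integrable ?\<Omega> (\<lambda>(x, M, M', e, e'). (norm (K (x, M, e)) * norm (v (x, M, e))) * 1)"
    by (rule lift5[OF X Q R spX spQ spR iKv]) simp
  have iF: "integrable ?\<Omega> F"
  proof (rule Bochner_Integration.integrable_bound[OF Bochner_Integration.integrable_add[OF d1 d2] Fm])
    show "AE \<omega> in ?\<Omega>. norm (F \<omega>) \<le> norm ((\<lambda>(x, M, M', e, e'). cg * (norm (K (x, M, e)) * norm (v (x, M, e))) * 1) \<omega>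
                                            + (\<lambda>(x, M, M', e, e'). ch * norm (K (x, M, e)) * norm e') \<omega>)"
      using AE_\<Omega>
    proof eventually_elim
      case (elim \<omega>)
      obtain x M M' e e' where w: "\<omega> = (x, M, M', e, e')" by (cases \<omega>) auto
      let ?K = "K (x, M, e)" and ?v = "v (x, M, e)"
      have "norm (F \<omega>) \<le> norm (adjoint_mat ?K *v (Gm M' *v ?v)) + norm (adjoint_mat ?K *v (Hm M' *v e'))"
        unfolding w F_def by (simp add: norm_triangle_ineq4)
      also have "\<dots> \<le> norm ?K * (norm (Gm M') * norm ?v) + norm ?K * (norm (Hm M') * norm e')"
        by (intro add_mono order_trans[OF norm_adj_mv] mult_left_mono norm_mv_le) auto
      also have "\<dots> \<le> norm ?K * (cg * norm ?v) + norm ?K * (ch * norm e')"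
        using elim w by (intro add_mono mult_left_mono mult_right_mono) auto
      also have "\<dots> \<le> norm ((\<lambda>(x, M, M', e, e'). cg * (norm (K (x, M, e)) * norm (v (x, M, e))) * 1) \<omega>
                                            + (\<lambda>(x, M, M', e, e'). ch * norm (K (x, M, e)) * norm e') \<omega>)"
        unfolding w by (simp add: algebra_simps)
      finally show ?case .
    qed
  qed
  have iG: "integrable ?\<Omega> G"
  proof (rule Bochner_Integration.integrable_bound[OF d3 Gm'])
    show "AE \<omega> in ?\<Omega>. norm (G \<omega>) \<le> norm ((\<lambda>(x, M, M', e, e'). (norm (K (x, M, e)) * norm (v (x, M, e))) * 1) \<omega>)"
    proof (rule AE_I2)
      fix \<omega> :: "(complex^'n) \<times> (complex^'n^'m) \<times> (complex^'n^'m) \<times> (complex^'m) \<times> (complex^'m)"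
      obtain x M M' e e' where w: "\<omega> = (x, M, M', e, e')" by (cases \<omega>) auto
      show "norm (G \<omega>) \<le> norm ((\<lambda>(x, M, M', e, e'). (norm (K (x, M, e)) * norm (v (x, M, e))) * 1) \<omega>)"
        unfolding w G_def using norm_adj_mv by simp
    qed
  qed
  have aK: "AE x in X. AE M in Q. integrable R (\<lambda>e. norm (K (x, M, e)))"
  proof -
    have "AE x in X. integrable (Q \<Otimes>\<^sub>M R) (\<lambda>y. norm (K (x, y)))"
      using XQR.AE_integrable_fst'[OF iK] by simp
    then show ?thesis
    proof eventually_elim
      case (elim x)
      from QR'.AE_integrable_fst'[OF elim] show ?case by simp
    qed
  qed
  have aKv: "AE x in X. AE M in Q. integrable R (\<lambda>e. norm (K (x, M, e)) * norm (v (x, M, e)))"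
  proof -
    have "AE x in X. integrable (Q \<Otimes>\<^sub>M R) (\<lambda>y. norm (K (x, y)) * norm (v (x, y)))"
      using XQR.AE_integrable_fst'[OF iKv] by simp
    then show ?thesis
    proof eventually_elim
      case (elim x)
      from QR'.AE_integrable_fst'[OF elim] show ?case by simp
    qed
  qed
  have main: "integral\<^sup>L ?\<Omega> F = integral\<^sup>L ?\<Omega> G"
  proof (rule iter2[OF psf[OF X QS] iF iG])
    show "AE x in X. integral\<^sup>L (Q \<Otimes>\<^sub>M ?S) (\<lambda>y. F (x, y)) = integral\<^sup>L (Q \<Otimes>\<^sub>M ?S) (\<lambda>y. G (x, y))"
      using XQS.AE_integrable_fst'[OF iF] XQS.AE_integrable_fst'[OF iG] aK aKv
    proof eventually_elim
      case (elim x)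
      show ?case
      proof (rule iter2[OF psf[OF Q S] elim(1) elim(2)])
        show "AE M in Q. integral\<^sup>L ?S (\<lambda>z. F (x, M, z)) = integral\<^sup>L ?S (\<lambda>z. G (x, M, z))"
          using elim(3,4)
        proof eventually_elim
          case (elim M)
          have Km: "(\<lambda>e. K (x, M, e)) \<in> borel_measurable R" by measurable
          have vm: "(\<lambda>e. v (x, M, e)) \<in> borel_measurable R" by measurable
          from inner[OF Q R Km vm Gm Hm elim(1) elim(2) bG bH EG sR iR ER]
          show ?case by (simp add: F_def G_def split_beta')
        qed
      qed
    qed
  qed
  show ?thesis using main by (simp add: F_def G_def split_beta')
qed

lemma bl_axis: "bounded_linear (axis i :: complex \<Rightarrow> complex^'m)"
  unfolding linear_conv_bounded_linear[symmetric]
  by (rule linearI) (auto simp: vec_eq_iff axis_def)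

lemma vec_as_sum: "(\<chi> i. f i) = (\<Sum>i\<in>UNIV. axis i (f i) :: complex^'m)"
  by (simp add: vec_eq_iff axis_def)

lemma cgauss_facts:
  assumes \<sigma>: "\<sigma> > 0"
  shows "prob_space (cgauss \<sigma>)" "sets (cgauss \<sigma>) = sets borel"
    "integrable (cgauss \<sigma>) (\<lambda>z. z)" "integral\<^sup>L (cgauss \<sigma>) (\<lambda>z. z) = 0"
proof -
  define s where "s = \<sigma> / sqrt 2"
  have s: "s > 0" using \<sigma> by (simp add: s_def)
  define N where "N = density lborel (normal_density 0 s)"
  have N: "prob_space N" unfolding N_def by (rule prob_space_normal_density[OF s])
  have sN: "sets N = sets borel" by (simp add: N_def)
  have [measurable]: "(\<lambda>x. x) \<in> borel_measurable N" by (rule measurable_ident_sets[OF sN])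
  have cg: "cgauss \<sigma> = distr (N \<Otimes>\<^sub>M N) borel (\<lambda>(a, b). Complex a b)"
    by (simp add: cgauss_def N_def s_def)
  have cm[measurable]: "(\<lambda>(a, b). Complex a b) \<in> borel_measurable (N \<Otimes>\<^sub>M N)"
  proof -
    have "(\<lambda>p. complex_of_real (fst p) + \<i> * complex_of_real (snd p)) \<in> borel_measurable (N \<Otimes>\<^sub>M N)"
      by measurable
    then show ?thesis by (simp add: split_beta' Complex_eq)
  qed
  have NN: "prob_space (N \<Otimes>\<^sub>M N)" by (rule prob_space_pair[OF N N])
  show "prob_space (cgauss \<sigma>)" unfolding cg by (rule prob_space.prob_space_distr[OF NN cm])
  show "sets (cgauss \<sigma>) = sets borel" unfolding cg by simp
  have iN: "integrable N (\<lambda>a. a)"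
    unfolding N_def by (subst integrable_density) (auto simp: integrable_normal_moment_nz_1[OF s])
  have EN: "integral\<^sup>L N (\<lambda>a. a) = 0"
    unfolding N_def
    by (subst integral_density) (auto intro: has_bochner_integral_integral_eq normal_moment_nz_1[OF s, of 0])
  have i1: "integrable N (\<lambda>a. complex_of_real a)" using iN by simp
  have i2: "integrable N (\<lambda>b. \<i> * complex_of_real b)" using i1 by (rule integrable_mult_right)
  have eq: "(\<lambda>(a, b). Complex a b) = (\<lambda>p. (\<lambda>(a, b). complex_of_real a) p + (\<lambda>(a, b). \<i> * complex_of_real b) p)"
    by (auto simp: Complex_eq)
  have I: "integrable (N \<Otimes>\<^sub>M N) (\<lambda>(a, b). Complex a b)"
    unfolding eq by (intro Bochner_Integration.integrable_add lift_fst(1)[OF N N i1] lift_snd(1)[OF N N i2])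
  show "integrable (cgauss \<sigma>) (\<lambda>z. z)"
    unfolding cg by (subst integrable_distr_eq) (use I in auto)
  have "integral\<^sup>L (N \<Otimes>\<^sub>M N) (\<lambda>(a, b). Complex a b) = 0"
    unfolding eq
    by (subst Bochner_Integration.integral_add[OF lift_fst(1)[OF N N i1] lift_snd(1)[OF N N i2]])
       (simp add: lift_fst(2)[OF N N i1] lift_snd(2)[OF N N i2] EN)
  then show "integral\<^sup>L (cgauss \<sigma>) (\<lambda>z. z) = 0"
    unfolding cg by (subst integral_distr) auto
qed

lemma cgauss_vec_facts:
  assumes \<sigma>: "\<sigma> > 0"
  shows "prob_space (cgauss_vec \<sigma> :: (complex^'m) measure)" "sets (cgauss_vec \<sigma> :: (complex^'m) measure) = sets borel"
    "integrable (cgauss_vec \<sigma> :: (complex^'m) measure) (\<lambda>z. z)"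
    "integral\<^sup>L (cgauss_vec \<sigma> :: (complex^'m) measure) (\<lambda>z. z) = 0"
proof -
  note C = cgauss_facts[OF \<sigma>]
  let ?P = "PiM (UNIV :: 'm set) (\<lambda>_. cgauss \<sigma>)"
  have P: "prob_space ?P" by (rule prob_space_PiM) (rule C(1))
  have [measurable]: "(\<lambda>x. x) \<in> borel_measurable (cgauss \<sigma>)" by (rule measurable_ident_sets[OF C(2)])
  have comp[measurable]: "(\<lambda>f. f i) \<in> borel_measurable ?P" for i :: 'm
    by measurable
  have ax[measurable]: "axis i \<in> borel_measurable (borel :: complex measure)" for i :: 'm
    by (rule borel_measurable_continuous_onI, rule linear_continuous_on[OF bl_axis])
  have vm[measurable]: "(\<lambda>f. \<chi> i. f i :: complex^'m) \<in> borel_measurable ?P"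
    unfolding vec_as_sum by measurable
  have cv: "(cgauss_vec \<sigma> :: (complex^'m) measure) = distr ?P borel (\<lambda>f. \<chi> i. f i)"
    by (simp add: cgauss_vec_def)
  show "prob_space (cgauss_vec \<sigma> :: (complex^'m) measure)"
    unfolding cv by (rule prob_space.prob_space_distr[OF P vm])
  show "sets (cgauss_vec \<sigma> :: (complex^'m) measure) = sets borel" unfolding cv by simp
  have dc: "distr ?P (cgauss \<sigma>) (\<lambda>\<omega>. \<omega> i) = cgauss \<sigma>" for i :: 'm
    by (rule distr_PiM_component) (auto intro: C(1))
  have ic: "integrable ?P (\<lambda>f. f i)" for i :: 'm
  proof -
    have "integrable (distr ?P (cgauss \<sigma>) (\<lambda>\<omega>. \<omega> i)) (\<lambda>z. z)" unfolding dc by (rule C(3))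
    then show ?thesis by (subst (asm) integrable_distr_eq) auto
  qed
  have ec: "integral\<^sup>L ?P (\<lambda>f. f i) = 0" for i :: 'm
  proof -
    have "integral\<^sup>L (distr ?P (cgauss \<sigma>) (\<lambda>\<omega>. \<omega> i)) (\<lambda>z. z) = 0" unfolding dc by (rule C(4))
    then show ?thesis by (subst (asm) integral_distr) auto
  qed
  have ia: "integrable ?P (\<lambda>f. axis i (f i) :: complex^'m)" for i :: 'm
    by (rule integrable_bounded_linear[OF bl_axis ic])
  have IP: "integrable ?P (\<lambda>f. \<chi> i. f i :: complex^'m)"
    unfolding vec_as_sum by (rule Bochner_Integration.integrable_sum) (rule ia)
  show "integrable (cgauss_vec \<sigma> :: (complex^'m) measure) (\<lambda>z. z)"
    unfolding cv by (subst integrable_distr_eq) (use IP in auto)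
  have "integral\<^sup>L ?P (\<lambda>f. \<chi> i. f i :: complex^'m) = 0"
  proof -
    have "integral\<^sup>L ?P (\<lambda>f. \<Sum>i\<in>UNIV. axis i (f i) :: complex^'m) = (\<Sum>i\<in>UNIV. integral\<^sup>L ?P (\<lambda>f. axis i (f i) :: complex^'m))"
      by (rule Bochner_Integration.integral_sum) (rule ia)
    also have "\<dots> = (\<Sum>i\<in>UNIV. axis i (integral\<^sup>L ?P (\<lambda>f. f i)) :: complex^'m)"
      by (rule sum.cong[OF refl]) (rule integral_bounded_linear[OF bl_axis ic])
    also have "\<dots> = 0" by (simp add: ec axis_def vec_eq_iff)
    finally show ?thesis unfolding vec_as_sum .
  qed
  then show "integral\<^sup>L (cgauss_vec \<sigma> :: (complex^'m) measure) (\<lambda>z. z) = 0"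
    unfolding cv by (subst integral_distr) auto
qed

definition diagm :: "('n \<Rightarrow> complex) \<Rightarrow> complex^'n^'n" where
  "diagm d = (\<chi> i j. if i = j then d i else 0)"

lemma diag_mult: "diagm a ** diagm b = diagm (\<lambda>i. a i * b i)"
proof -
  have "(\<Sum>k\<in>UNIV. (if i = k then a i else 0) * (if k = j then b k else 0)) = (if i = j then a i * b i else 0)" for i j
  proof -
    have "(\<Sum>k\<in>UNIV. (if i = k then a i else 0) * (if k = j then b k else 0))
        = (\<Sum>k\<in>UNIV. if k = i then a i * (if k = j then b k else 0) else 0)"
      by (rule sum.cong) auto
    also have "\<dots> = a i * (if i = j then b i else 0)" by (subst sum.delta) simp_all
    finally show ?thesis by simp
  qed
  then show ?thesis by (simp add: vec_eq_iff matrix_matrix_mult_def diagm_def)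
qed

lemma diag_tr: "transpose (diagm a) = diagm a"
  unfolding vec_eq_iff transpose_def diagm_def by simp

lemma rank_diag:
  fixes d :: "'n::finite \<Rightarrow> complex"
  assumes "rank (diagm d) = CARD('n)"
  shows "d a \<noteq> 0"
proof
  assume da: "d a = 0"
  let ?A = "diagm d :: complex^'n^'n"
  have r0: "row a ?A = 0" using da by (simp add: row_def diagm_def vec_eq_iff)
  have rA: "rows ?A = (\<lambda>i. row i ?A) ` UNIV" by (auto simp: rows_def)
  have fin: "finite (rows ?A)" unfolding rA by simp
  have dimle: "vec.dim (rows ?A) \<le> card (rows ?A - {0})"
  proof (rule vec.dim_le_card)
    show "rows ?A \<subseteq> vec.span (rows ?A - {0})"
    proof
      fix x assume "x \<in> rows ?A"
      then show "x \<in> vec.span (rows ?A - {0})"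
        by (cases "x = 0") (auto intro: vec.span_zero vec.span_base)
    qed
  qed (use fin in simp)
  have c2: "card (rows ?A - {0}) = card (rows ?A) - 1"
    using r0 fin by (subst card_Diff_singleton) (auto simp: rA)
  have c3: "card (rows ?A) \<le> CARD('n)"
    unfolding rA by (rule card_image_le) simp
  have "0 < CARD('n)" by simp
  then have "rank ?A < CARD('n)" unfolding row_rank_def_gen using dimle c2 c3 by linarith
  with assms show False by simp
qed

lemma samp_rows:
  assumes "sampling_matrix (M :: complex^'n^'m)"
  obtains j where "\<And>r. M $ r = axis (j r) 1" "inj j"
proof -
  have "\<forall>r. \<exists>j. M $ r = axis j 1" using assms unfolding sampling_matrix_def by blast
  from choice[OF this] obtain j where j: "\<And>r. M $ r = axis (j r) 1" by blast
  have "inj j"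
  proof (rule injI)
    fix r r' assume "j r = j r'"
    then have "M $ r = M $ r'" by (simp add: j)
    moreover have "inj (\<lambda>i. M $ i)" using assms unfolding sampling_matrix_def by blast
    ultimately show "r = r'" by (simp add: inj_eq)
  qed
  with j that show ?thesis by blast
qed

lemma samp_entry:
  assumes "\<And>r. M $ r = axis (j r) 1"
  shows "M $ r $ a = (if a = j r then 1 else 0)"
  using assms[of r] by (simp add: axis_def)

lemma samp_adj:
  assumes "sampling_matrix (M :: complex^'n^'m)"
  shows "adjoint_mat M = transpose M"
proof -
  obtain j where j: "\<And>r. M $ r = axis (j r) 1" using samp_rows[OF assms] by metis
  show ?thesis by (simp add: vec_eq_iff adjoint_mat_def transpose_def samp_entry[OF j])
qed

lemma samp_D:
  assumes "sampling_matrix (M :: complex^'n^'m)"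
  shows "transpose M ** M = diagm (\<lambda>a. if (\<exists>r. M $ r = axis a 1) then 1 else 0)"
proof -
  obtain j where j: "\<And>r. M $ r = axis (j r) 1" and ij: "inj j" using samp_rows[OF assms] by metis
  have ex: "(\<exists>r. M $ r = axis a 1) \<longleftrightarrow> (\<exists>r. j r = a)" for a
    by (simp add: j axis_eq_axis)
  have "(transpose M ** M) $ a $ b = (if a = b \<and> (\<exists>r. j r = a) then 1 else 0)" for a b
  proof -
    have "(transpose M ** M) $ a $ b = (\<Sum>r\<in>UNIV. M$r$a * M$r$b)"
      by (simp add: matrix_matrix_mult_def transpose_def)
    also have "\<dots> = (\<Sum>r\<in>UNIV. (if j r = a \<and> j r = b then 1 else 0))"
      by (rule sum.cong[OF refl]) (simp add: samp_entry[OF j])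
    also have "\<dots> = (if a = b \<and> (\<exists>r. j r = a) then 1 else 0)"
    proof (cases "a = b \<and> (\<exists>r. j r = a)")
      case True
      then obtain r0 where r0: "j r0 = a" "a = b" by blast
      have "(\<Sum>r\<in>UNIV. (if j r = a \<and> j r = b then 1 else 0 :: complex)) = (\<Sum>r\<in>UNIV. (if r = r0 then 1 else 0))"
        using r0 ij by (intro sum.cong) (auto dest: injD)
      then show ?thesis using True r0 by auto
    next
      case False
      then have z: "\<And>r. (if j r = a \<and> j r = b then 1 else (0::complex)) = 0" by auto
      show ?thesis using False by (simp only: z sum.neutral_const) simp
    qed
    finally show ?thesis .
  qed
  then show ?thesis unfolding ex by (simp add: vec_eq_iff diagm_def)
qed

lemma samp_norm:
  assumes "sampling_matrix (M :: complex^'n^'m)"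
  shows "norm M \<le> real CARD('m)"
proof -
  obtain j where j: "\<And>r. M $ r = axis (j r) 1" using samp_rows[OF assms] by metis
  have "norm M \<le> (\<Sum>r\<in>UNIV. norm (M $ r))" unfolding norm_vec_def[of M] by (rule L2_set_le_sum) simp
  also have "\<dots> = real CARD('m)" by (simp add: j)
  finally show ?thesis .
qed

lemma borel_measurable_vec_nth'[measurable (raw)]:
  assumes "f \<in> borel_measurable N"
  shows "(\<lambda>x. (f x :: 'a::real_normed_vector^'n) $ i) \<in> borel_measurable N"
proof -
  have "(\<lambda>v::'a^'n. v $ i) \<in> borel_measurable borel"
    by (rule borel_measurable_continuous_onI) (intro continuous_intros)
  from measurable_compose[OF assms this] show ?thesis .
qed

lemma mm_bound: "norm (X::complex^'n^'m) \<le> a \<Longrightarrow> norm (Y::complex^'k^'n) \<le> b \<Longrightarrow> norm (X ** Y) \<le> a * b"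
  by (rule order_trans[OF norm_mm_le]) (rule mult_mono, auto intro: order_trans[OF norm_ge_zero])

lemma mat1_diag: "(mat 1 :: complex^'n^'n) = diagm (\<lambda>_. 1)"
  by (simp add: mat_def diagm_def)

lemma mean_diag:
  fixes pM :: "(complex^'n^'m) measure"
  assumes pM_prob: "prob_space pM" and pM_sets: "sets pM = sets borel"
    and pM_sampling: "AE M in pM. sampling_matrix M"
    and full_rank: "rank (mean_MtM pM) = CARD('n)"
  obtains r where "\<And>i. r i > 0" "mean_MtM pM = diagm (\<lambda>i. complex_of_real (r i))"
proof -
  interpret P: prob_space pM by fact
  have [measurable]: "(\<lambda>x. x) \<in> borel_measurable pM" by (rule measurable_ident_sets[OF pM_sets])
  have Dm[measurable]: "(\<lambda>M::complex^'n^'m. transpose M ** M) \<in> borel_measurable pM" by measurable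
  have Db: "AE M in pM. norm (transpose M ** M) \<le> real CARD('m) * real CARD('m)"
    using pM_sampling by eventually_elim (intro mm_bound, auto simp: norm_tr samp_norm)
  have iD: "integrable pM (\<lambda>M::complex^'n^'m. transpose M ** M)"
    by (rule P.integrable_const_bound[OF Db Dm])
  have ent: "AE M in pM. (transpose M ** M) $ a $ b = complex_of_real (Re ((transpose M ** M) $ a $ b))
               \<and> 0 \<le> Re ((transpose M ** M) $ a $ b) \<and> (a \<noteq> b \<longrightarrow> Re ((transpose M ** M) $ a $ b) = 0)" for a b
    using pM_sampling by eventually_elim (auto simp: samp_D diagm_def)
  define r where "r a = integral\<^sup>L pM (\<lambda>M::complex^'n^'m. Re ((transpose M ** M) $ a $ a))" for a
  have Eab: "mean_MtM pM $ a $ b = complex_of_real (integral\<^sup>L pM (\<lambda>M::complex^'n^'m. Re ((transpose M ** M) $ a $ b)))" for a b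
  proof -
    have bl: "bounded_linear (\<lambda>Z::complex^'n^'n. Z $ a $ b)"
      by (rule bounded_linear_compose[where f="\<lambda>v. v $ b" and g="\<lambda>Z. Z $ a"]) (rule bounded_linear_vec_nth)+
    have "mean_MtM pM $ a $ b = integral\<^sup>L pM (\<lambda>M::complex^'n^'m. (transpose M ** M) $ a $ b)"
      unfolding mean_MtM_def using integral_bounded_linear[OF bl iD] by simp
    also have "\<dots> = integral\<^sup>L pM (\<lambda>M::complex^'n^'m. complex_of_real (Re ((transpose M ** M) $ a $ b)))"
      by (rule integral_cong_AE) (use ent[of a b] in \<open>auto elim: eventually_mono\<close>)
    finally show ?thesis by simp
  qed
  have off: "mean_MtM pM $ a $ b = 0" if "a \<noteq> b" for a b
  proof -
    have "integral\<^sup>L pM (\<lambda>M::complex^'n^'m. Re ((transpose M ** M) $ a $ b)) = integral\<^sup>L pM (\<lambda>M. 0::real)"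
      by (rule integral_cong_AE) (use ent[of a b] that in \<open>auto elim: eventually_mono\<close>)
    then show ?thesis using Eab[of a b] by simp
  qed
  have E: "mean_MtM pM = diagm (\<lambda>i. complex_of_real (r i))"
  proof -
    have "mean_MtM pM $ i $ j = (if i = j then complex_of_real (r i) else 0)" for i j
    proof (cases "i = j")
      case True then show ?thesis by (simp add: Eab r_def)
    next
      case False then show ?thesis by (simp add: off)
    qed
    then show ?thesis by (simp add: vec_eq_iff diagm_def)
  qed
  have rnn: "r a \<ge> 0" for a
    unfolding r_def by (rule integral_nonneg_AE) (use ent[of a a] in \<open>auto elim: eventually_mono\<close>)
  have "complex_of_real (r a) \<noteq> 0" for a
    using rank_diag[of "\<lambda>i. complex_of_real (r i)" a] full_rank E by simp
  then have "r a > 0" for a using rnn[of a] by (simp add: order_less_le)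
  with E that show ?thesis by blast
qed

lemma EW:
  fixes pM :: "(complex^'n^'m) measure"
  assumes pM_prob: "prob_space pM" and pM_sets: "sets pM = sets borel"
    and pM_sampling: "AE M in pM. sampling_matrix M"
    and full_rank: "rank (mean_MtM pM) = CARD('n)"
  obtains w where "Wbar pM = diagm w" "mean_MtM pM ** diagm (\<lambda>i. w i * w i) = mat 1"
proof -
  obtain r where r: "\<And>i. r i > 0" and E: "mean_MtM pM = diagm (\<lambda>i. complex_of_real (r i))"
    using mean_diag[OF assms] by blast
  define w where "w i = complex_of_real (r i powr (-1/2))" for i
  have W: "Wbar pM = diagm w"
    using r by (auto simp: Wbar_def E diagm_def w_def vec_eq_iff)
  have "r i * (r i powr (-1/2) * r i powr (-1/2)) = 1" for i
  proof -
    have "r i powr (-1/2) * r i powr (-1/2) = r i powr (-1)"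
      by (simp add: powr_add[symmetric])
    also have "\<dots> = inverse (r i)" using r[of i] by (simp add: powr_minus)
    finally show ?thesis using r[of i] by simp
  qed
  then have "mean_MtM pM ** diagm (\<lambda>i. w i * w i) = mat 1"
    unfolding E diag_mult mat1_diag w_def
    by (simp flip: of_real_mult)
  with W that show ?thesis by blast
qed

lemma GH_facts:
  fixes A :: "complex^'n^'n" and pM :: "(complex^'n^'m) measure"
  assumes A_orth: "adjoint_mat A ** A = mat 1"
    and pM_prob: "prob_space pM" and pM_sets: "sets pM = sets borel"
    and pM_sampling: "AE M in pM. sampling_matrix M"
    and full_rank: "rank (mean_MtM pM) = CARD('n)"
  shows "(\<lambda>M'. adjoint_mat (M' ** A) ** Wmat pM M' ** (M' ** A)) \<in> borel_measurable pM"
    "(\<lambda>M'. adjoint_mat (M' ** A) ** Wmat pM M') \<in> borel_measurable pM"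
    "\<exists>cg. AE M' in pM. norm (adjoint_mat (M' ** A) ** Wmat pM M' ** (M' ** A)) \<le> cg"
    "\<exists>ch. AE M' in pM. norm (adjoint_mat (M' ** A) ** Wmat pM M') \<le> ch"
    "integral\<^sup>L pM (\<lambda>M'. adjoint_mat (M' ** A) ** Wmat pM M' ** (M' ** A)) = mat 1"
proof -
  interpret P: prob_space pM by fact
  have [measurable]: "(\<lambda>x. x) \<in> borel_measurable pM" by (rule measurable_ident_sets[OF pM_sets])
  let ?Wb = "Wbar pM"
  show m1: "(\<lambda>M'. adjoint_mat (M' ** A) ** Wmat pM M' ** (M' ** A)) \<in> borel_measurable pM"
    unfolding Wmat_def by measurable
  show "(\<lambda>M'. adjoint_mat (M' ** A) ** Wmat pM M') \<in> borel_measurable pM"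
    unfolding Wmat_def by measurable
  let ?c = "real CARD('m)"
  have nMW: "norm (M' ** ?Wb) \<le> ?c * norm ?Wb" if "sampling_matrix M'" for M' :: "complex^'n^'m"
    by (rule mm_bound[OF samp_norm[OF that] order_refl])
  have nW: "norm (Wmat pM M') \<le> (?c * norm ?Wb) * (?c * norm ?Wb)" if "sampling_matrix M'" for M' :: "complex^'n^'m"
    unfolding Wmat_def
    by (rule mm_bound) (simp_all add: norm_tr nMW that)
  have nA: "norm (adjoint_mat (M' ** A)) \<le> ?c * norm A" if "sampling_matrix M'" for M' :: "complex^'n^'m"
    unfolding norm_adj by (rule mm_bound[OF samp_norm[OF that] order_refl])
  have nMA: "norm (M' ** A) \<le> ?c * norm A" if "sampling_matrix M'" for M' :: "complex^'n^'m"
    by (rule mm_bound[OF samp_norm[OF that] order_refl])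
  show "\<exists>cg. AE M' in pM. norm (adjoint_mat (M' ** A) ** Wmat pM M' ** (M' ** A)) \<le> cg"
  proof (intro exI)
    show "AE M' in pM. norm (adjoint_mat (M' ** A) ** Wmat pM M' ** (M' ** A)) \<le> ((?c * norm A) * ((?c * norm ?Wb) * (?c * norm ?Wb))) * (?c * norm A)"
      using pM_sampling by eventually_elim (rule mm_bound[OF mm_bound[OF nA nW] nMA])
  qed
  show "\<exists>ch. AE M' in pM. norm (adjoint_mat (M' ** A) ** Wmat pM M') \<le> ch"
  proof (intro exI)
    show "AE M' in pM. norm (adjoint_mat (M' ** A) ** Wmat pM M') \<le> (?c * norm A) * ((?c * norm ?Wb) * (?c * norm ?Wb))"
      using pM_sampling by eventually_elim (rule mm_bound[OF nA nW])
  qed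
  obtain w where W: "?Wb = diagm w" and EW2: "mean_MtM pM ** diagm (\<lambda>i. w i * w i) = mat 1"
    using EW[OF pM_prob pM_sets pM_sampling full_rank] by blast
  let ?W2 = "diagm (\<lambda>i. w i * w i)"
  have W2: "?Wb ** transpose ?Wb = ?W2" by (simp add: W diag_tr diag_mult)
  have pt: "adjoint_mat (M' ** A) ** Wmat pM M' ** (M' ** A) = adjoint_mat A ** ((transpose M' ** M') ** ?W2) ** A"
    if s: "sampling_matrix M'" for M' :: "complex^'n^'m"
  proof -
    have "adjoint_mat (M' ** A) ** Wmat pM M' ** (M' ** A)
        = adjoint_mat A ** (((transpose M' ** M') ** (?Wb ** transpose ?Wb)) ** (transpose M' ** M')) ** A"
      by (simp add: Wmat_def adj_mult samp_adj[OF s] matrix_transpose_mul matrix_mul_assoc)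
    also have "((transpose M' ** M') ** (?Wb ** transpose ?Wb)) ** (transpose M' ** M') = (transpose M' ** M') ** ?W2"
      unfolding W2 samp_D[OF s] diag_mult by (rule arg_cong[where f=diagm]) auto
    finally show ?thesis .
  qed
  have Dm[measurable]: "(\<lambda>M::complex^'n^'m. transpose M ** M) \<in> borel_measurable pM" by measurable
  have Db: "AE M in pM. norm (transpose M ** M) \<le> ?c * ?c"
    using pM_sampling by eventually_elim (intro mm_bound, auto simp: norm_tr samp_norm)
  have iD: "integrable pM (\<lambda>M::complex^'n^'m. transpose M ** M)"
    by (rule P.integrable_const_bound[OF Db Dm])
  have bl: "bounded_linear (\<lambda>Z::complex^'n^'n. adjoint_mat A ** (Z ** ?W2) ** A)"
    by (intro bounded_linear_compose[OF bl_mm_left] bounded_linear_compose[OF bl_mm_right] bl_mm_left)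
  have "integral\<^sup>L pM (\<lambda>M'. adjoint_mat (M' ** A) ** Wmat pM M' ** (M' ** A))
      = integral\<^sup>L pM (\<lambda>M'. adjoint_mat A ** ((transpose M' ** M') ** ?W2) ** A)"
    by (rule integral_cong_AE) (use m1 pM_sampling pt in \<open>auto elim: eventually_mono\<close>)
  also have "\<dots> = adjoint_mat A ** (mean_MtM pM ** ?W2) ** A"
    unfolding mean_MtM_def by (rule integral_bounded_linear[OF bl iD])
  also have "\<dots> = mat 1" by (simp add: EW2 A_orth)
  finally show "integral\<^sup>L pM (\<lambda>M'. adjoint_mat (M' ** A) ** Wmat pM M' ** (M' ** A)) = mat 1" .
qed

theorem theorem1:
  fixes A :: "complex^'n^'n"
    and px :: "(complex^'n) measure"
    and pM :: "(complex^'n^'m) measure"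
    and \<sigma> :: real
    and T :: "real^'p \<Rightarrow> complex^'n \<Rightarrow> complex^'m \<Rightarrow> complex^'n"
    and \<theta> :: "real^'p"
    and xbar :: "complex^'m \<Rightarrow> complex^'n"
    and DT :: "complex^'n \<Rightarrow> complex^'m \<Rightarrow> real^'p \<Rightarrow> complex^'n"
  assumes A_orth: "adjoint_mat A ** A = mat 1"
    and pM_prob: "prob_space pM" and pM_sets: "sets pM = sets borel"
    and pM_sampling: "AE M in pM. sampling_matrix M"
    and full_rank: "rank (mean_MtM pM) = CARD('n)"
    and px_prob: "prob_space px" and px_sets: "sets px = sets borel"
    and sigma_pos: "\<sigma> > 0"
    and fixed_point: "\<And>y. T \<theta> (xbar y) y = xbar y"
    and deriv: "\<And>z y. ((\<lambda>t. T t z y) has_derivative DT z y) (at \<theta>)"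
    and xbar_meas: "xbar \<in> borel_measurable borel"
    and jac_meas: "(\<lambda>y. jacobian_matrix (DT (xbar y) y)) \<in> borel_measurable borel"
    and int_jac: "integrable (px \<Otimes>\<^sub>M pM \<Otimes>\<^sub>M cgauss_vec \<sigma>)
        (\<lambda>(x, M, e). norm (jacobian_matrix (DT (xbar (M *v (A *v x) + e)) (M *v (A *v x) + e))))"
    and int_jac_err: "integrable (px \<Otimes>\<^sub>M pM \<Otimes>\<^sub>M cgauss_vec \<sigma>)
        (\<lambda>(x, M, e). norm (jacobian_matrix (DT (xbar (M *v (A *v x) + e)) (M *v (A *v x) + e)))
                     * norm (xbar (M *v (A *v x) + e) - x))"
  shows "Re_vec (integral\<^sup>L (px \<Otimes>\<^sub>M pM \<Otimes>\<^sub>M pM \<Otimes>\<^sub>M cgauss_vec \<sigma> \<Otimes>\<^sub>M cgauss_vec \<sigma>)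
            (\<lambda>(x, M, M', e, e').
               let y = M *v (A *v x) + e; y' = M' *v (A *v x) + e'; xb = xbar y
               in adjoint_mat (jacobian_matrix (DT xb y))
                    *v (adjoint_mat (M' ** A) *v (Wmat pM M' *v ((M' ** A) *v xb - y')))))
       = Re_vec (integral\<^sup>L (px \<Otimes>\<^sub>M pM \<Otimes>\<^sub>M pM \<Otimes>\<^sub>M cgauss_vec \<sigma> \<Otimes>\<^sub>M cgauss_vec \<sigma>)
            (\<lambda>(x, M, M', e, e' :: complex^'m).
               let y = M *v (A *v x) + e; xb = xbar y
               in adjoint_mat (jacobian_matrix (DT xb y)) *v (xb - x)))"
proof -
  let ?G = "cgauss_vec \<sigma> :: (complex^'m) measure"
  note GF = cgauss_vec_facts[OF sigma_pos, where 'm='m]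
  obtain cg where bG: "AE M' in pM. norm (adjoint_mat (M' ** A) ** Wmat pM M' ** (M' ** A)) \<le> cg"
    using GH_facts(3)[OF A_orth pM_prob pM_sets pM_sampling full_rank] by blast
  obtain ch where bH: "AE M' in pM. norm (adjoint_mat (M' ** A) ** Wmat pM M') \<le> ch"
    using GH_facts(4)[OF A_orth pM_prob pM_sets pM_sampling full_rank] by blast
  define J where "J = (\<lambda>y. jacobian_matrix (DT (xbar y) y))"
  define yf where "yf = (\<lambda>\<omega>::(complex^'n) \<times> (complex^'n^'m) \<times> (complex^'m). fst (snd \<omega>) *v (A *v fst \<omega>) + snd (snd \<omega>))"
  define K where "K = (\<lambda>\<omega>. J (yf \<omega>))"
  define v where "v = (\<lambda>\<omega>. xbar (yf \<omega>) - fst \<omega>)"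
  have [measurable]: "(\<lambda>x. x) \<in> borel_measurable px" by (rule measurable_ident_sets[OF px_sets])
  have [measurable]: "(\<lambda>x. x) \<in> borel_measurable pM" by (rule measurable_ident_sets[OF pM_sets])
  have [measurable]: "(\<lambda>x. x) \<in> borel_measurable ?G" by (rule measurable_ident_sets[OF GF(2)])
  have yfm: "yf \<in> borel_measurable (px \<Otimes>\<^sub>M pM \<Otimes>\<^sub>M ?G)"
    unfolding yf_def by (rule borel_measurable_add; (rule borel_measurable_mv)?; measurable)
  have Km: "K \<in> borel_measurable (px \<Otimes>\<^sub>M pM \<Otimes>\<^sub>M ?G)"
    unfolding K_def using measurable_compose[OF yfm jac_meas[folded J_def]] .
  have vm: "v \<in> borel_measurable (px \<Otimes>\<^sub>M pM \<Otimes>\<^sub>M ?G)"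
    unfolding v_def by (rule borel_measurable_diff[OF measurable_compose[OF yfm xbar_meas]]) measurable
  have iK: "integrable (px \<Otimes>\<^sub>M pM \<Otimes>\<^sub>M ?G) (\<lambda>\<omega>. norm (K \<omega>))"
    using int_jac by (simp add: K_def J_def yf_def split_beta')
  have iKv: "integrable (px \<Otimes>\<^sub>M pM \<Otimes>\<^sub>M ?G) (\<lambda>\<omega>. norm (K \<omega>) * norm (v \<omega>))"
    using int_jac_err by (simp add: K_def J_def v_def yf_def split_beta')
  have main: "integral\<^sup>L (px \<Otimes>\<^sub>M pM \<Otimes>\<^sub>M pM \<Otimes>\<^sub>M ?G \<Otimes>\<^sub>M ?G)
           (\<lambda>(x, M, M', e, e'). adjoint_mat (K (x, M, e)) *v ((adjoint_mat (M' ** A) ** Wmat pM M' ** (M' ** A)) *v v (x, M, e))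
                               - adjoint_mat (K (x, M, e)) *v ((adjoint_mat (M' ** A) ** Wmat pM M') *v e'))
       = integral\<^sup>L (px \<Otimes>\<^sub>M pM \<Otimes>\<^sub>M pM \<Otimes>\<^sub>M ?G \<Otimes>\<^sub>M ?G)
           (\<lambda>(x, M, M', e, e'). adjoint_mat (K (x, M, e)) *v v (x, M, e))"
    by (rule outer[OF px_prob pM_prob GF(1) px_sets pM_sets GF(2) Km vm
          GH_facts(1,2)[OF A_orth pM_prob pM_sets pM_sampling full_rank] iK iKv bG bH
          GH_facts(5)[OF A_orth pM_prob pM_sets pM_sampling full_rank] GF(3) GF(4)])
  have lhs: "(\<lambda>(x, M, M', e, e').
               let y = M *v (A *v x) + e; y' = M' *v (A *v x) + e'; xb = xbar y
               in adjoint_mat (jacobian_matrix (DT xb y))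
                    *v (adjoint_mat (M' ** A) *v (Wmat pM M' *v ((M' ** A) *v xb - y'))))
     = (\<lambda>(x, M, M', e, e'). adjoint_mat (K (x, M, e)) *v ((adjoint_mat (M' ** A) ** Wmat pM M' ** (M' ** A)) *v v (x, M, e))
                               - adjoint_mat (K (x, M, e)) *v ((adjoint_mat (M' ** A) ** Wmat pM M') *v e'))"
    by (auto simp: fun_eq_iff Let_def K_def J_def v_def yf_def matrix_vector_mul_assoc[symmetric]
          matrix_vector_mult_diff_distrib matrix_vector_right_distrib)
  have rhs: "(\<lambda>(x, M, M', e, e' :: complex^'m).
               let y = M *v (A *v x) + e; xb = xbar y
               in adjoint_mat (jacobian_matrix (DT xb y)) *v (xb - x))
     = (\<lambda>(x, M, M', e, e'). adjoint_mat (K (x, M, e)) *v v (x, M, e))"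
    by (auto simp: fun_eq_iff Let_def K_def J_def v_def yf_def)
  show ?thesis unfolding lhs rhs main ..
qed

end
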